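(* Let $L$ be a geometric lattice of rank $r+1$ with atoms linearly ordered. If $(b_1,\dots,b_i,b_{i+1},\dots,b_{r+1})$ is the minimal labeling of a facet of $\Delta(L)$ and $b_i<b_{i+1}$, then $(b_1,\dots,b_{i+1},b_i,\dots,b_{r+1})$ (the sequence with $b_i$ and $b_{i+1}$ interchanged) is also the minimal labeling of a facet of $\Delta(L)$.
   Context: A geometric lattice is a finite graded atomic lattice whose rank function $\rho$ satisfies $\rho(x\vee y)+\rho(x\wedge y)\le \rho(x)+\rho(y)$. Facets of the order complex $\Delta(L)$ correspond to maximal chains $\hat 0=x_0<x_1<\dots<x_{r+1}=\hat 1$ of $L$. Fix a linear order on the atoms. For a cover $x\lessdot y$, let $\lambda(x,y)$ be the least atom $a$ with $x\vee a=y$; the minimal labeling of the facet is $(\lambda(x_0,x_1),\dots,\lambda(x_r,x_{r+1}))$. A sequence of atoms is "the minimal labeling of a facet" if it equals the minimal labeling of some maximal chain. *)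

theory Defs
  imports Main
begin

definition covers :: "'a::order \<Rightarrow> 'a \<Rightarrow> bool" where
  "covers x y \<longleftrightarrow> x < y \<and> \<not> (\<exists>z. x < z \<and> z < y)"

definition atom :: "'a::bounded_lattice \<Rightarrow> bool" where
  "atom a \<longleftrightarrow> covers bot a"

definition is_join_of :: "'a::order set \<Rightarrow> 'a \<Rightarrow> bool" where
  "is_join_of S x \<longleftrightarrow> (\<forall>a\<in>S. a \<le> x) \<and> (\<forall>z. (\<forall>a\<in>S. a \<le> z) \<longrightarrow> x \<le> z)"

definition atomic_lattice :: "'a::bounded_lattice itself \<Rightarrow> bool" where
  "atomic_lattice _ \<longleftrightarrow> (\<forall>x::'a. \<exists>S. S \<subseteq> {a. atom a} \<and> is_join_of S x)"

definition rank_function :: "('a::bounded_lattice \<Rightarrow> nat) \<Rightarrow> bool" where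
  "rank_function \<rho> \<longleftrightarrow> \<rho> bot = 0 \<and> (\<forall>x y. covers x y \<longrightarrow> \<rho> y = Suc (\<rho> x))"

definition geometric_lattice :: "'a::{finite,bounded_lattice} itself \<Rightarrow> bool" where
  "geometric_lattice T \<longleftrightarrow> atomic_lattice T \<and>
     (\<exists>\<rho>::'a \<Rightarrow> nat. rank_function \<rho> \<and>
        (\<forall>x y. \<rho> (sup x y) + \<rho> (inf x y) \<le> \<rho> x + \<rho> y))"

definition linear_order_on_atoms :: "('a::bounded_lattice \<Rightarrow> 'a \<Rightarrow> bool) \<Rightarrow> bool" where
  "linear_order_on_atoms lt \<longleftrightarrow>
     (\<forall>a. atom a \<longrightarrow> \<not> lt a a) \<and>
     (\<forall>a b c. atom a \<and> atom b \<and> atom c \<and> lt a b \<and> lt b c \<longrightarrow> lt a c) \<and>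
     (\<forall>a b. atom a \<and> atom b \<and> a \<noteq> b \<longrightarrow> lt a b \<or> lt b a)"

definition maximal_chain :: "'a::bounded_lattice list \<Rightarrow> bool" where
  "maximal_chain xs \<longleftrightarrow> xs \<noteq> [] \<and> hd xs = bot \<and> last xs = top \<and>
     (\<forall>j. Suc j < length xs \<longrightarrow> covers (xs ! j) (xs ! Suc j))"

definition min_label :: "('a::bounded_lattice \<Rightarrow> 'a \<Rightarrow> bool) \<Rightarrow> 'a \<Rightarrow> 'a \<Rightarrow> 'a" where
  "min_label lt x y = (THE a. atom a \<and> sup x a = y \<and>
      (\<forall>b. atom b \<and> sup x b = y \<and> b \<noteq> a \<longrightarrow> lt a b))"

definition min_labeling :: "('a::bounded_lattice \<Rightarrow> 'a \<Rightarrow> bool) \<Rightarrow> 'a list \<Rightarrow> 'a list" where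
  "min_labeling lt xs = map (\<lambda>j. min_label lt (xs ! j) (xs ! Suc j)) [0..<length xs - 1]"

definition is_min_labeling_of_facet :: "('a::bounded_lattice \<Rightarrow> 'a \<Rightarrow> bool) \<Rightarrow> 'a list \<Rightarrow> bool" where
  "is_min_labeling_of_facet lt bs \<longleftrightarrow> (\<exists>xs. maximal_chain xs \<and> min_labeling lt xs = bs)"

end

theory Submission
  imports Defs
begin

lemma rank_strict:
  fixes \<rho> :: "'a::{finite,bounded_lattice} \<Rightarrow> nat"
  assumes rf: "rank_function \<rho>" and "x < y"
  shows "\<rho> x < \<rho> y"
proof -
  have "\<forall>x y. card {z. x<z \<and> z<y} = n \<longrightarrow> x < y \<longrightarrow> \<rho> x < \<rho> y" for n
  proof (induction n rule: less_induct)
    case (less n)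
    show ?case
    proof (intro allI impI)
      fix x y :: 'a assume n: "card {z. x<z \<and> z<y} = n" and xy: "x<y"
      show "\<rho> x < \<rho> y"
      proof (cases "\<exists>z. x<z \<and> z<y")
        case False
        then have "covers x y" using xy by (simp add: covers_def)
        then show ?thesis using rf by (simp add: rank_function_def)
      next
        case True
        then obtain z where z: "x<z" "z<y" by blast
        have "card {w. x<w \<and> w<z} < n" unfolding n[symmetric]
          apply (rule psubset_card_mono) using z by auto
        then have 1: "\<rho> x < \<rho> z" using less z by blast
        have "card {w. z<w \<and> w<y} < n" unfolding n[symmetric]
          apply (rule psubset_card_mono) using z by auto
        then have 2: "\<rho> z < \<rho> y" using less z by blast
        show ?thesis using 1 2 by simp
      qed
    qed
  qed
  thus ?thesis using assms by blast
qed

lemma rank_eq: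
  fixes \<rho> :: "'a::{finite,bounded_lattice} \<Rightarrow> nat"
  assumes "rank_function \<rho>" "a \<le> b" "\<rho> b \<le> \<rho> a"
  shows "a = b"
  by (metis assms rank_strict order_less_le not_le)

lemma covers_rank:
  "rank_function \<rho> \<Longrightarrow> covers x y \<Longrightarrow> \<rho> y = Suc (\<rho> x)"
  by (simp add: rank_function_def)

lemma join_atom_covers:
  fixes \<rho> :: "'a::{finite,bounded_lattice} \<Rightarrow> nat"
  assumes rf: "rank_function \<rho>" and sm: "\<forall>x y. \<rho> (sup x y) + \<rho> (inf x y) \<le> \<rho> x + \<rho> y"
    and at: "atom (a::'a)" and na: "\<not> a \<le> x"
  shows "covers x (sup x a)"
proof -
  have "inf x a < a" using na by (metis inf_le2 inf_le1 order_less_le)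
  moreover have cb: "covers bot a" using at by (simp add: atom_def)
  ultimately have "inf x a = bot" unfolding covers_def using bot.not_eq_extremum by blast
  moreover have "\<rho> a = 1" using covers_rank[OF rf cb] rf by (simp add: rank_function_def)
  ultimately have r: "\<rho> (sup x a) \<le> \<rho> x + 1" using sm rf by (metis add_0_right rank_function_def)
  have xs: "x < sup x a" using na by (metis sup_ge1 sup_ge2 order_less_le)
  show ?thesis unfolding covers_def
  proof (intro conjI xs notI)
    assume "\<exists>w. x < w \<and> w < sup x a"
    then obtain w where "x < w" "w < sup x a" by blast
    then have "\<rho> x < \<rho> w" "\<rho> w < \<rho> (sup x a)" using rank_strict[OF rf] by auto
    then show False using r by simp
  qed
qed

lemma exists_atom:
  fixes u v :: "'a::{finite,bounded_lattice}"
  assumes "atomic_lattice TYPE('a)" "covers u v"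
  shows "\<exists>a. atom a \<and> sup u a = v"
proof -
  obtain S where S: "S \<subseteq> {a. atom a}" "is_join_of S v"
    using assms(1) unfolding atomic_lattice_def by blast
  have uv: "u < v" using assms(2) by (simp add: covers_def)
  have "\<exists>a\<in>S. \<not> a \<le> u"
  proof (rule ccontr)
    assume "\<not> ?thesis"
    then have "v \<le> u" using S(2) unfolding is_join_of_def by blast
    then show False using uv by simp
  qed
  then obtain a where a: "a \<in> S" "\<not> a \<le> u" by blast
  have av: "a \<le> v" using S(2) a unfolding is_join_of_def by blast
  have "u < sup u a" using a by (metis sup_ge1 sup_ge2 order_less_le)
  moreover have "sup u a \<le> v" using av uv by simp
  ultimately have "sup u a = v" using assms(2) unfolding covers_def by (metis order_less_le)
  then show ?thesis using a S by blast
qed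

lemma least_exists:
  assumes lo: "linear_order_on_atoms lt" and "finite A" "A \<noteq> {}" "A \<subseteq> {a. atom a}"
  shows "\<exists>a\<in>A. \<forall>b\<in>A. b \<noteq> a \<longrightarrow> lt a b"
  using assms(2,3,4)
proof (induction A rule: finite_ne_induct)
  case (singleton x)
  then show ?case by simp
next
  case (insert x F)
  then obtain a where a: "a \<in> F" "\<forall>b\<in>F. b \<noteq> a \<longrightarrow> lt a b" by auto
  have ax: "atom x" "atom a" using insert a by auto
  have "x \<noteq> a" using insert a by auto
  then have "lt x a \<or> lt a x" using lo ax unfolding linear_order_on_atoms_def by blast
  then show ?case
  proof
    assume xa: "lt x a"
    have "\<forall>b\<in>insert x F. b \<noteq> x \<longrightarrow> lt x b"
    proof (intro ballI impI)
      fix b assume b: "b \<in> insert x F" "b \<noteq> x"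
      then have bF: "b \<in> F" by simp
      show "lt x b"
      proof (cases "b = a")
        case True then show ?thesis using xa by simp
      next
        case False
        then have "lt a b" using a bF by blast
        moreover have "atom b" using bF insert by auto
        ultimately show ?thesis using xa ax lo unfolding linear_order_on_atoms_def by blast
      qed
    qed
    then show ?thesis by blast
  next
    assume "lt a x"
    then show ?thesis using a by auto
  qed
qed

definition lprop where
  "lprop lt u v a \<longleftrightarrow> atom a \<and> sup u a = v \<and> (\<forall>b. atom b \<and> sup u b = v \<and> b \<noteq> a \<longrightarrow> lt a b)"

lemma label_unique:
  assumes lo: "linear_order_on_atoms lt" and p: "lprop lt u v a"
  shows "min_label lt u v = a"
  unfolding min_label_def
proof (rule the_equality)
  show "atom a \<and> sup u a = v \<and> (\<forall>b. atom b \<and> sup u b = v \<and> b \<noteq> a \<longrightarrow> lt a b)"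
    using p by (simp add: lprop_def)
next
  fix a' assume a': "atom a' \<and> sup u a' = v \<and> (\<forall>b. atom b \<and> sup u b = v \<and> b \<noteq> a' \<longrightarrow> lt a' b)"
  show "a' = a"
  proof (rule ccontr)
    assume ne: "a' \<noteq> a"
    then have "lt a' a" "lt a a'" using a' p by (auto simp: lprop_def)
    then have "lt a a" using lo a' p unfolding linear_order_on_atoms_def lprop_def by blast
    then show False using lo p unfolding linear_order_on_atoms_def lprop_def by blast
  qed
qed

lemma label_props:
  fixes u v :: "'a::{finite,bounded_lattice}"
  assumes lo: "linear_order_on_atoms lt" and al: "atomic_lattice TYPE('a)" and c: "covers u v"
  shows "lprop lt u v (min_label lt u v)"
proof -
  let ?A = "{a. atom a \<and> sup u a = v}"
  have "?A \<noteq> {}" using exists_atom[OF al c] by blast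
  then obtain a where a: "a \<in> ?A" "\<forall>b\<in>?A. b \<noteq> a \<longrightarrow> lt a b"
    using least_exists[OF lo, of ?A] by auto
  then have "lprop lt u v a" by (simp add: lprop_def)
  then show ?thesis using label_unique[OF lo] by simp
qed

theorem lemma4p3:
  fixes lt :: "'a::{finite,bounded_lattice} \<Rightarrow> 'a \<Rightarrow> bool"
    and bs :: "'a list" and r i :: nat
  assumes "geometric_lattice TYPE('a)"
    and "linear_order_on_atoms lt"
    and "\<And>xs::'a list. maximal_chain xs \<Longrightarrow> length xs = r + 2"
    and "is_min_labeling_of_facet lt bs"
    and "1 \<le> i" and "i \<le> r"
    and "lt (bs ! (i - 1)) (bs ! i)"
  shows "is_min_labeling_of_facet lt (bs[i - 1 := bs ! i, i := bs ! (i - 1)])"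
proof -
  note lo = assms(2)
  have al: "atomic_lattice TYPE('a)" using assms(1) by (simp add: geometric_lattice_def)
  obtain \<rho> :: "'a \<Rightarrow> nat" where rf: "rank_function \<rho>"
    and sm: "\<forall>x y. \<rho> (sup x y) + \<rho> (inf x y) \<le> \<rho> x + \<rho> y"
    using assms(1) by (auto simp: geometric_lattice_def)
  obtain xs where mc: "maximal_chain xs" and bsd: "min_labeling lt xs = bs"
    using assms(4) by (auto simp: is_min_labeling_of_facet_def)
  have lxs: "length xs = r + 2" using assms(3) mc by blast
  obtain k where ik: "i = Suc k" using assms(5) by (cases i) auto
  have kr: "Suc k \<le> r" using assms(6) ik by simp
  have lbs: "length bs = r + 1" using bsd lxs by (auto simp: min_labeling_def)
  have bsn: "bs ! j = min_label lt (xs ! j) (xs ! Suc j)" if "j < r + 1" for j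
  proof -
    have "bs = map (\<lambda>j. min_label lt (xs ! j) (xs ! Suc j)) [0..<r+1]"
      using bsd lxs by (simp add: min_labeling_def)
    then show ?thesis using that by (simp del: upt_Suc)
  qed
  have cov: "covers (xs ! j) (xs ! Suc j)" if "Suc j < r + 2" for j
    using mc that lxs by (simp add: maximal_chain_def)
  define x where "x = xs ! k"
  define m where "m = xs ! Suc k"
  define z where "z = xs ! Suc (Suc k)"
  define b where "b = bs ! k"
  define c where "c = bs ! Suc k"
  have cxm: "covers x m" using cov[of k] kr by (simp add: x_def m_def)
  have cmz: "covers m z" using cov[of "Suc k"] kr by (simp add: z_def m_def)
  have bp: "lprop lt x m b" using bsn[of k] kr label_props[OF lo al cxm] by (simp add: b_def x_def m_def)
  have cp: "lprop lt m z c" using bsn[of "Suc k"] kr label_props[OF lo al cmz] by (simp add: c_def z_def m_def)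
  have bc: "lt b c" using assms(7) ik by (simp add: b_def c_def)
  have irr: "\<And>a. atom a \<Longrightarrow> \<not> lt a a" and tr: "\<And>a b c. atom a \<Longrightarrow> atom b \<Longrightarrow> atom c \<Longrightarrow> lt a b \<Longrightarrow> lt b c \<Longrightarrow> lt a c"
    and tot: "\<And>a b. atom a \<Longrightarrow> atom b \<Longrightarrow> a \<noteq> b \<Longrightarrow> lt a b \<or> lt b a"
    using lo unfolding linear_order_on_atoms_def by blast+
  have atb: "atom b" and xb: "sup x b = m" and bmin: "\<And>a. atom a \<Longrightarrow> sup x a = m \<Longrightarrow> a \<noteq> b \<Longrightarrow> lt b a"
    using bp by (auto simp: lprop_def)
  have atc: "atom c" and mc': "sup m c = z" and cmin: "\<And>a. atom a \<Longrightarrow> sup m a = z \<Longrightarrow> a \<noteq> c \<Longrightarrow> lt c a"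
    using cp by (auto simp: lprop_def)
  have xm: "x < m" "m < z" using cxm cmz by (auto simp: covers_def)
  have rm: "\<rho> m = Suc (\<rho> x)" "\<rho> z = Suc (\<rho> m)" using covers_rank[OF rf] cxm cmz by auto
  have cnm: "\<not> c \<le> m"
  proof
    assume "c \<le> m"
    then have "sup m c = m" by (rule sup.absorb1)
    then show False using mc' xm by simp
  qed
  have cnx: "\<not> c \<le> x" using cnm xm by (meson order_less_imp_le order_trans)
  define y where "y = sup x c"
  have cxy: "covers x y" unfolding y_def by (rule join_atom_covers[OF rf sm atc cnx])
  have ry: "\<rho> y = Suc (\<rho> x)" using covers_rank[OF rf cxy] .
  have "c \<le> y" by (simp add: y_def)
  then have ynm: "y \<noteq> m" using cnm by auto
  have cz: "c \<le> z" unfolding mc'[symmetric] by simp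
  have "x \<le> z" using xm by simp
  then have yz: "y \<le> z" unfolding y_def using cz by simp
  have "y \<noteq> z" using rm ry by auto
  then have ylz: "y < z" using yz by simp
  have cyz: "covers y z" unfolding covers_def
  proof (intro conjI ylz notI)
    assume "\<exists>w. y < w \<and> w < z"
    then obtain w where "y < w" "w < z" by blast
    then have "\<rho> y < \<rho> w" "\<rho> w < \<rho> z" using rank_strict[OF rf] by auto
    then show False using rm ry by simp
  qed
  have J: "sup m w = z" if cw: "covers x w" and wm: "w \<noteq> m" and wz: "w \<le> z" for w
  proof -
    have nwm: "\<not> w \<le> m"
    proof
      assume "w \<le> m"
      then have "w < m" using wm by (simp add: order_less_le)
      moreover have "x < w" using cw by (simp add: covers_def)
      ultimately show False using cxm unfolding covers_def by blast
    qed
    have "m \<le> sup m w" by simp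
    moreover have "m \<noteq> sup m w"
    proof
      assume "m = sup m w"
      then have "w \<le> m" by (metis sup_ge2)
      then show False using nwm by simp
    qed
    ultimately have "m < sup m w" by (simp add: order_less_le)
    then have "\<rho> m < \<rho> (sup m w)" by (rule rank_strict[OF rf])
    then have r1: "\<rho> z \<le> \<rho> (sup m w)" using rm by simp
    have "m \<le> z" using xm by simp
    then have r2: "sup m w \<le> z" using wz by simp
    show ?thesis by (rule rank_eq[OF rf r2 r1])
  qed
  have xmle: "x \<le> m" using xm by simp
  have l1: "min_label lt x y = c"
  proof (rule label_unique[OF lo])
    show "lprop lt x y c" unfolding lprop_def
    proof (intro conjI allI impI)
      show "atom c" by (rule atc)
      show "sup x c = y" by (simp add: y_def)
      fix a assume a: "atom a \<and> sup x a = y \<and> a \<noteq> c"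
      show "lt c a"
      proof (rule ccontr)
        assume "\<not> lt c a"
        then have ac: "lt a c" using tot[of a c] a atc by blast
        have smx: "sup m x = m" using xmle by (rule sup.absorb1)
        have "sup m a = sup m (sup x a)" by (simp add: sup_assoc[symmetric] smx)
        also have "\<dots> = sup m y" using a by simp
        also have "\<dots> = z" using J[OF cxy ynm yz] .
        finally have "lt c a" using cmin a by blast
        then show False using tr[of c a c] irr[of c] ac a atc by blast
      qed
    qed
  qed
  have l2: "min_label lt y z = b"
  proof (rule label_unique[OF lo])
    show "lprop lt y z b" unfolding lprop_def
    proof (intro conjI allI impI)
      show "atom b" by (rule atb)
      have "sup (sup x c) b = sup (sup x b) c" by (simp add: ac_simps)
      then show "sup y b = z" unfolding y_def using xb mc' by simp
      fix a assume a: "atom a \<and> sup y a = z \<and> a \<noteq> b"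
      show "lt b a"
      proof (rule ccontr)
        assume "\<not> lt b a"
        then have ab: "lt a b" using tot[of a b] a atb by blast
        have "a \<le> sup y a" by simp
        then have az: "a \<le> z" using a by simp
        have anx: "\<not> a \<le> x"
        proof
          assume "a \<le> x"
          then have "a \<le> y" unfolding y_def by (simp add: le_supI1)
          then have "sup y a = y" by (simp add: sup.absorb1)
          then show False using a ylz by simp
        qed
        define w where "w = sup x a"
        have ata: "atom a" using a by blast
        have cxw: "covers x w" unfolding w_def by (rule join_atom_covers[OF rf sm ata anx])
        have "x \<le> z" using xm by simp
        then have wz: "w \<le> z" unfolding w_def using az by simp
        show False
        proof (cases "w = m")
          case True
          then have "sup x a = m" by (simp add: w_def)
          then have "lt b a" using bmin a by blast
          then show False using tr[of a b a] irr[of a] ab a atb by blast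
        next
          case False
          have smx: "sup m x = m" using xmle by (rule sup.absorb1)
          have "sup m a = sup m w" unfolding w_def by (simp add: sup_assoc[symmetric] smx)
          also have "\<dots> = z" using J[OF cxw False wz] .
          finally have smz: "sup m a = z" .
          have ac: "lt a c" using tr[of a b c] ab bc a atb atc by blast
          then have "a \<noteq> c" using irr[of a] a by blast
          then have "lt c a" using cmin smz a by blast
          then show False using tr[of a c a] irr[of a] ac a atc by blast
        qed
      qed
    qed
  qed
  define ys where "ys = xs[Suc k := y]"
  have lys: "length ys = r + 2" using lxs by (simp add: ys_def)
  have ysn: "ys ! j = (if j = Suc k then y else xs ! j)" if "j < r + 2" for j
    using that lxs by (simp add: ys_def)
  have cys: "covers (ys ! j) (ys ! Suc j)" if "Suc j < r + 2" for j
  proof -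
    consider "j = k" | "j = Suc k" | "j \<noteq> k" "j \<noteq> Suc k" by blast
    then show ?thesis
    proof cases
      case 1 then show ?thesis using ysn[of j] ysn[of "Suc j"] that cxy by (simp add: x_def)
    next
      case 2 then show ?thesis using ysn[of j] ysn[of "Suc j"] that cyz by (simp add: z_def)
    next
      case 3 then show ?thesis using ysn[of j] ysn[of "Suc j"] that cov[of j] by simp
    qed
  qed
  have mcy: "maximal_chain ys" unfolding maximal_chain_def
  proof (intro conjI allI impI)
    show "ys \<noteq> []" using lys by auto
    have hx: "hd xs = bot" and lx: "last xs = top" and nx: "xs \<noteq> []"
      using mc unfolding maximal_chain_def by auto
    have ny: "ys \<noteq> []" using lys by auto
    have "hd ys = ys ! 0" using ny by (rule hd_conv_nth)
    also have "\<dots> = xs ! 0" using ysn[of 0] by simp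
    also have "\<dots> = hd xs" using nx by (simp add: hd_conv_nth)
    finally show "hd ys = bot" using hx by simp
    have "last ys = ys ! (r + 1)" using ny lys by (simp add: last_conv_nth)
    also have "\<dots> = xs ! (r + 1)" using ysn[of "r+1"] kr by simp
    also have "\<dots> = last xs" using nx lxs by (simp add: last_conv_nth)
    finally show "last ys = top" using lx by simp
    fix j assume "Suc j < length ys" then show "covers (ys ! j) (ys ! Suc j)" using cys lys by simp
  qed
  have "min_labeling lt ys = bs[i - 1 := bs ! i, i := bs ! (i - 1)]"
  proof (rule nth_equalityI)
    show "length (min_labeling lt ys) = length (bs[i - 1 := bs ! i, i := bs ! (i - 1)])"
      using lys lbs by (simp add: min_labeling_def)
    fix j assume "j < length (min_labeling lt ys)"
    then have j: "j < r + 1" using lys by (simp add: min_labeling_def)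
    have L: "min_labeling lt ys ! j = min_label lt (ys ! j) (ys ! Suc j)"
      using j lys by (simp add: min_labeling_def del: upt_Suc)
    consider "j = k" | "j = Suc k" | "j \<noteq> k" "j \<noteq> Suc k" by blast
    then show "min_labeling lt ys ! j = bs[i - 1 := bs ! i, i := bs ! (i - 1)] ! j"
    proof cases
      case 1 then show ?thesis using L ysn[of j] ysn[of "Suc j"] j l1 lbs kr ik
        by (simp add: x_def c_def)
    next
      case 2 then show ?thesis using L ysn[of j] ysn[of "Suc j"] j l2 lbs kr ik
        by (simp add: z_def b_def)
    next
      case 3 then show ?thesis using L ysn[of j] ysn[of "Suc j"] j lbs ik bsn[of j] by simp
    qed
  qed
  then show ?thesis using mcy unfolding is_min_labeling_of_facet_def by blast
qed

end
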